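(* Let $Q$ be a reduced quantale with bottom element $0$. Then the m-filter $\mathcal{F}_{\nmid0}$ is conormal over $Q$. Moreover, for $x,y\in Q$, $\overline x=\overline y$ in $Q_{\mathcal{F}_{\nmid0}}$ if and only if $\hbar(x)=\hbar(y)$, where $\hbar:Q\to Q$, $\hbar(q)=\sum\{q'\in Q:qq'=0\}$.
   Context: A quantale is a poset $Q$ with all nonempty joins $\sum$, top $1$, commutative associative multiplication with unit $1$ distributing over nonempty joins. $Q$ with bottom $0$ is reduced if $a^2=0$ implies $a=0$. An m-filter is a subset of $Q$ containing $1$, upward closed and closed under multiplication. For $a\in Q$ the codense filter is $\mathcal{F}_{\nmid a}=\{q\in Q: \text{for all }x\in Q,\ qx\le a\Rightarrow x\le a\}$ (an m-filter). For $a,b\in Q$: $a\preceq^1_\mathcal{F}b$ means there are families $(a_i)$ in $Q$, $(s_i)$ in $\mathcal{F}$ with $a\le\sum a_i$ and $s_ia_i\le b$; $a\preceq^n_\mathcal{F}b$ means a chain of $n$ such steps; $a\preceq_\mathcal{F}b$ means $a\preceq^n_\mathcal{F}b$ for some $n\ge1$. $Q_\mathcal{F}$ is $Q$ modulo $a\sim b\iff a\preceq_\mathcal{F}b\preceq_\mathcal{F}a$, with classes $\overline a$. $\mathcal{C}$ is conormal over $Q$ (as a module over itself) if for all $m,n\in Q$ with $m\preceq^1_\mathcal{C}n$ there is $s\in\mathcal{C}$ with $sm\le n$. *)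

theory Defs
  imports Main
begin

text \<open>A quantale with bottom: a poset with all nonempty joins and a bottom element is
  exactly a complete lattice, so the carrier is a type of class complete_lattice.\<close>

definition quantale :: "('a::complete_lattice \<Rightarrow> 'a \<Rightarrow> 'a) \<Rightarrow> bool" where
  "quantale mult \<longleftrightarrow>
     (\<forall>a b. mult a b = mult b a) \<and>
     (\<forall>a b c. mult (mult a b) c = mult a (mult b c)) \<and>
     (\<forall>a. mult top a = a) \<and>
     (\<forall>a A. A \<noteq> {} \<longrightarrow> mult a (Sup A) = Sup (mult a ` A))"

definition reduced :: "('a::complete_lattice \<Rightarrow> 'a \<Rightarrow> 'a) \<Rightarrow> bool" where
  "reduced mult \<longleftrightarrow> (\<forall>a. mult a a = bot \<longrightarrow> a = bot)"

definition m_filter :: "('a::complete_lattice \<Rightarrow> 'a \<Rightarrow> 'a) \<Rightarrow> 'a set \<Rightarrow> bool" where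
  "m_filter mult F \<longleftrightarrow> top \<in> F \<and> (\<forall>a b. a \<in> F \<longrightarrow> a \<le> b \<longrightarrow> b \<in> F) \<and>
     (\<forall>a b. a \<in> F \<longrightarrow> b \<in> F \<longrightarrow> mult a b \<in> F)"

definition codense :: "('a::complete_lattice \<Rightarrow> 'a \<Rightarrow> 'a) \<Rightarrow> 'a \<Rightarrow> 'a set" where
  "codense mult a = {q. \<forall>x. mult q x \<le> a \<longrightarrow> x \<le> a}"

text \<open>a \<preceq>^1_F b: a nonempty family of pairs (a_i, s_i) with s_i in F,
  a \<le> \<Sum> a_i and s_i a_i \<le> b.  (A family is represented by the set of its pairs,
  which has the same join.)\<close>
definition prec1 :: "('a::complete_lattice \<Rightarrow> 'a \<Rightarrow> 'a) \<Rightarrow> 'a set \<Rightarrow> 'a \<Rightarrow> 'a \<Rightarrow> bool" where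
  "prec1 mult F a b \<longleftrightarrow>
     (\<exists>P :: ('a \<times> 'a) set. P \<noteq> {} \<and> a \<le> Sup (fst ` P) \<and>
        (\<forall>(x, s) \<in> P. s \<in> F \<and> mult s x \<le> b))"

definition precn :: "('a::complete_lattice \<Rightarrow> 'a \<Rightarrow> 'a) \<Rightarrow> 'a set \<Rightarrow> nat \<Rightarrow> 'a \<Rightarrow> 'a \<Rightarrow> bool" where
  "precn mult F n = (prec1 mult F ^^ n)"

definition prec :: "('a::complete_lattice \<Rightarrow> 'a \<Rightarrow> 'a) \<Rightarrow> 'a set \<Rightarrow> 'a \<Rightarrow> 'a \<Rightarrow> bool" where
  "prec mult F a b \<longleftrightarrow> (\<exists>n\<ge>1. precn mult F n a b)"

definition sim :: "('a::complete_lattice \<Rightarrow> 'a \<Rightarrow> 'a) \<Rightarrow> 'a set \<Rightarrow> 'a \<Rightarrow> 'a \<Rightarrow> bool" where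
  "sim mult F a b \<longleftrightarrow> prec mult F a b \<and> prec mult F b a"

definition cls :: "('a::complete_lattice \<Rightarrow> 'a \<Rightarrow> 'a) \<Rightarrow> 'a set \<Rightarrow> 'a \<Rightarrow> 'a set" where
  "cls mult F a = {b. sim mult F a b}"

definition conormal :: "('a::complete_lattice \<Rightarrow> 'a \<Rightarrow> 'a) \<Rightarrow> 'a set \<Rightarrow> bool" where
  "conormal mult C \<longleftrightarrow> (\<forall>m n. prec1 mult C m n \<longrightarrow> (\<exists>s\<in>C. mult s m \<le> n))"

definition hbar :: "('a::complete_lattice \<Rightarrow> 'a \<Rightarrow> 'a) \<Rightarrow> 'a \<Rightarrow> 'a" where
  "hbar mult q = Sup {q'. mult q q' = bot}"

end

theory Submission
  imports Defs
begin

lemma q_comm: "quantale mult \<Longrightarrow> mult a b = mult b a"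
  by (simp add: quantale_def)
lemma q_assoc: "quantale mult \<Longrightarrow> mult (mult a b) c = mult a (mult b c)"
  unfolding quantale_def by blast
lemma q_unit: "quantale mult \<Longrightarrow> mult top a = a"
  by (simp add: quantale_def)
lemma q_dist: "quantale mult \<Longrightarrow> A \<noteq> {} \<Longrightarrow> mult a (Sup A) = Sup (mult a ` A)"
  by (simp add: quantale_def)

lemma q_sup: "quantale mult \<Longrightarrow> mult c (sup a b) = sup (mult c a) (mult c b)"
  using q_dist[of mult "{a,b}" c] by simp

lemma q_mono: "quantale mult \<Longrightarrow> a \<le> b \<Longrightarrow> mult c a \<le> mult c b"
  using q_sup[of mult c a b] by (metis sup.absorb2 sup.cobounded1)

lemma q_bot: "quantale mult \<Longrightarrow> mult c bot = bot"
proof -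
  assume q: "quantale mult"
  have "mult c bot = mult bot c" using q_comm[OF q] .
  also have "\<dots> \<le> mult top c" using q_mono[OF q, of bot top c] q_comm[OF q, of c bot] q_comm[OF q, of c top] by simp
  also have "\<dots> = mult c top" using q_comm[OF q] .
  finally have "mult c bot \<le> mult c top" .
  have "mult c bot \<le> mult top bot" using q_mono[OF q, of c top bot] q_comm[OF q, of bot c] q_comm[OF q, of bot top] by simp
  hence "mult c bot \<le> bot" using q_unit[OF q, of bot] by simp
  thus ?thesis by (rule bot.extremum_uniqueI)
qed

lemma q_ann: "quantale mult \<Longrightarrow> mult q (hbar mult q) = bot"
proof -
  assume q: "quantale mult"
  have ne: "{q'. mult q q' = bot} \<noteq> {}" using q_bot[OF q, of q] by auto
  show ?thesis unfolding hbar_def using q_dist[OF q ne, of q] by auto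
qed

lemma q_le_hbar: "mult q z = bot \<Longrightarrow> z \<le> hbar mult q"
  unfolding hbar_def by (simp add: Sup_upper)

lemma codense_D: "s \<in> codense mult bot \<Longrightarrow> mult s x = bot \<Longrightarrow> x = bot"
proof -
  assume a: "s \<in> codense mult bot" "mult s x = bot"
  hence "x \<le> bot" unfolding codense_def by simp
  thus "x = bot" by (rule bot.extremum_uniqueI)
qed

lemma dense_elem:
  assumes q: "quantale mult" and r: "reduced mult"
  shows "sup b (hbar mult b) \<in> codense mult bot"
  unfolding codense_def
proof (safe)
  fix x assume "mult (sup b (hbar mult b)) x \<le> bot"
  hence "mult x (sup b (hbar mult b)) \<le> bot" using q_comm[OF q, of x "sup b (hbar mult b)"] by simp
  hence "mult x (sup b (hbar mult b)) = bot" by (rule bot.extremum_uniqueI)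
  hence h: "sup (mult x b) (mult x (hbar mult b)) = bot" using q_sup[OF q, of x b "hbar mult b"] by simp
  hence "mult b x = bot" using q_comm[OF q, of b x] by simp
  hence "x \<le> hbar mult b" by (rule q_le_hbar)
  hence "mult x x \<le> mult x (hbar mult b)" by (rule q_mono[OF q])
  also have "\<dots> = bot" using h by simp
  finally have "mult x x \<le> bot" .
  hence "mult x x = bot" by (rule bot.extremum_uniqueI)
  hence "x = bot" using r unfolding reduced_def by blast
  thus "x \<le> bot" by simp
qed

lemma prec1_E: assumes "prec1 mult F a b"
  shows "\<exists>P. P \<noteq> {} \<and> a \<le> Sup (fst ` P) \<and> (\<forall>p\<in>P. snd p \<in> F \<and> mult (snd p) (fst p) \<le> b)"
  using assms unfolding prec1_def by (auto simp: case_prod_beta)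

lemma prec1_hbar:
  assumes q: "quantale mult" and p: "prec1 mult (codense mult bot) a b"
  shows "hbar mult b \<le> hbar mult a"
proof -
  obtain P where ne: "P \<noteq> {}" and le: "a \<le> Sup (fst ` P)"
    and H: "\<And>p. p \<in> P \<Longrightarrow> snd p \<in> codense mult bot \<and> mult (snd p) (fst p) \<le> b"
    using prec1_E[OF p] by blast
  have "mult a z = bot" if bz: "mult b z = bot" for z
  proof -
    have each: "mult z x = bot" if xin: "x \<in> fst ` P" for x
    proof -
      obtain p where xp: "x = fst p" and pP: "p \<in> P" using xin by (rule imageE)
      have sF: "snd p \<in> codense mult bot" and sx: "mult (snd p) x \<le> b"
        using H[OF pP] xp by auto
      have "mult z (mult (snd p) x) \<le> mult z b" using q_mono[OF q sx] .
      also have "\<dots> = bot" using bz q_comm[OF q, of z b] by simp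
      finally have "mult z (mult (snd p) x) \<le> bot" .
      moreover have "mult z (mult (snd p) x) = mult (snd p) (mult z x)"
        using q_assoc[OF q, of z "snd p" x] q_assoc[OF q, of "snd p" z x] q_comm[OF q, of z "snd p"] by simp
      ultimately have "mult (snd p) (mult z x) \<le> bot" by simp
      hence "mult (snd p) (mult z x) = bot" by (rule bot.extremum_uniqueI)
      thus ?thesis using codense_D[OF sF] by blast
    qed
    have "mult z a \<le> mult z (Sup (fst ` P))" using q_mono[OF q le] .
    also have "\<dots> = Sup (mult z ` fst ` P)" using q_dist[OF q, of "fst ` P" z] ne by simp
    also have "\<dots> = bot" using each by simp
    finally have "mult z a \<le> bot" .
    hence "mult a z \<le> bot" using q_comm[OF q, of z a] by simp
    thus ?thesis by (rule bot.extremum_uniqueI)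
  qed
  thus ?thesis unfolding hbar_def by (intro Sup_subset_mono) auto
qed

lemma precn_hbar:
  assumes q: "quantale mult"
  shows "precn mult (codense mult bot) n a b \<Longrightarrow> hbar mult b \<le> hbar mult a"
  unfolding precn_def
proof (induction n arbitrary: b)
  case 0 thus ?case by simp
next
  case (Suc n)
  then obtain c where "(prec1 mult (codense mult bot) ^^ n) a c" "prec1 mult (codense mult bot) c b"
    by auto
  thus ?case using Suc.IH prec1_hbar[OF q] order_trans by metis
qed

lemma hbar_prec1:
  assumes q: "quantale mult" and r: "reduced mult" and h: "hbar mult b \<le> hbar mult a"
  shows "prec1 mult (codense mult bot) a b"
proof -
  let ?s = "sup b (hbar mult b)"
  have "mult ?s a = sup (mult a b) (mult a (hbar mult b))" using q_sup[OF q, of a b "hbar mult b"] q_comm[OF q, of ?s a] by simp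
  also have "mult a b \<le> b" using q_mono[OF q, of a top b] q_unit[OF q, of b] q_comm[OF q, of b a] q_comm[OF q, of b top] by simp
  hence "sup (mult a b) (mult a (hbar mult b)) \<le> sup b (mult a (hbar mult a))"
    using q_mono[OF q h] by (meson sup_mono)
  also have "\<dots> = b" using q_ann[OF q] by simp
  finally have "mult ?s a \<le> b" .
  thus ?thesis unfolding prec1_def using dense_elem[OF q r, of b]
    by (intro exI[of _ "{(a, ?s)}"]) auto
qed

lemma sim_iff:
  assumes q: "quantale mult" and r: "reduced mult"
  shows "sim mult (codense mult bot) x y \<longleftrightarrow> hbar mult x = hbar mult y"
proof
  assume "sim mult (codense mult bot) x y"
  thus "hbar mult x = hbar mult y" unfolding sim_def prec_def
    using precn_hbar[OF q] by (metis order_antisym)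
next
  assume e: "hbar mult x = hbar mult y"
  have "prec mult (codense mult bot) a b" if "hbar mult b \<le> hbar mult a" for a b
    unfolding prec_def precn_def using hbar_prec1[OF q r that]
    by (intro exI[of _ 1]) auto
  thus "sim mult (codense mult bot) x y" unfolding sim_def using e by simp
qed

theorem mainTheorem15:
  fixes mult :: "'a::complete_lattice \<Rightarrow> 'a \<Rightarrow> 'a"
  assumes "quantale mult" and "reduced mult"
  shows "conormal mult (codense mult bot) \<and>
         (\<forall>x y. cls mult (codense mult bot) x = cls mult (codense mult bot) y
                \<longleftrightarrow> hbar mult x = hbar mult y)"
proof
  note q = assms(1) and r = assms(2)
  show "conormal mult (codense mult bot)" unfolding conormal_def
  proof (intro allI impI)
    fix m n assume p: "prec1 mult (codense mult bot) m n"
    let ?s = "sup n (hbar mult n)"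
    have h: "hbar mult n \<le> hbar mult m" using prec1_hbar[OF q p] .
    have "mult ?s m = sup (mult m n) (mult m (hbar mult n))" using q_sup[OF q, of m n "hbar mult n"] q_comm[OF q, of ?s m] by simp
    also have "mult m n \<le> n" using q_mono[OF q, of m top n] q_unit[OF q, of n] q_comm[OF q, of n m] q_comm[OF q, of n top] by simp
    hence "sup (mult m n) (mult m (hbar mult n)) \<le> sup n (mult m (hbar mult m))"
      using q_mono[OF q h] by (meson sup_mono)
    also have "\<dots> = n" using q_ann[OF q] by simp
    finally have "mult ?s m \<le> n" .
    thus "\<exists>s\<in>codense mult bot. mult s m \<le> n" using dense_elem[OF q r, of n] by blast
  qed
  show "\<forall>x y. cls mult (codense mult bot) x = cls mult (codense mult bot) y
                \<longleftrightarrow> hbar mult x = hbar mult y"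
  proof (intro allI)
    fix x y
    have c: "cls mult (codense mult bot) z = {b. hbar mult z = hbar mult b}" for z
      unfolding cls_def by (auto simp: sim_iff[OF q r])
    show "cls mult (codense mult bot) x = cls mult (codense mult bot) y
                \<longleftrightarrow> hbar mult x = hbar mult y"
      unfolding c by auto
  qed
qed

end
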